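(* In the setting and construction described in the context, with $M_{s,t}=(1+R(4,R(4,s)))^{t-2}$: (1) $|S_{t-1}|\le M_{s,t}$ (a constant depending only on $s$ and $t$); (2) $V\setminus(S_{t-1}\cup N(S_{t-1}))=\emptyset$, i.e. $S_{t-1}$ is a dominating set of $G$.
   Context: All graphs are finite and simple. $P_t$ is the path on $t$ vertices; $K_4$ is the complete graph on $4$ vertices; $SDK_s$ is the one-subdivision of $K_{1,s}$ (replace each edge $uv$ of the star $K_{1,s}$ by a path $u w v$ through a new vertex $w$). A graph is $\mathcal{H}$-free if it has no induced subgraph isomorphic to a member of $\mathcal{H}$. $R(k,l)$ denotes the Ramsey number: the least integer such that every graph on at least $R(k,l)$ vertices contains a clique on $k$ vertices or a stable set on $l$ vertices. For $X\subseteq V$, $N(X)=\bigcup_{v\in X}N(v)$. A set $D\subseteq V$ is dominating if every vertex outside $D$ has a neighbor in $D$. Setting: $s,t$ are positive integers with $t\ge 2$, and $G=(V,E)$ is a connected $(P_t,SDK_s,K_4)$-free graph. Fix a vertex $a\in V$, and set $S_1=\{a\}$. For $i=1,2,\dots,t-2$ define $S_{i+1}$ as follows: let $B_i=N(S_i)$ and $W_i=V\setminus(B_i\cup S_i)$; enumerate $S_i=\{v_1,\dots,v_{|S_i|}\}$ and for $j=1,\dots,|S_i|$ let $B_i^j=\{v\in B_i\setminus\bigcup_{k<j}B_i^k : v\text{ is adjacent to }v_j\}$ (so $B_i=\bigcup_j B_i^j$); for each $j$ let $X_i^j\subseteq B_i^j$ be an inclusion-minimal set such that every $w\in W_i$ with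 $N(w)\cap B_i^j\neq\emptyset$ satisfies $N(w)\cap X_i^j\ne\emptyset$; let $X_i=\bigcup_j X_i^j$ and $S_{i+1}=S_i\cup X_i$. The choices of enumeration and of minimal sets are arbitrary. *)

theory Defs
  imports Main
begin

definition simple_graph :: "'a set \<Rightarrow> ('a \<Rightarrow> 'a \<Rightarrow> bool) \<Rightarrow> bool" where
  "simple_graph V E \<longleftrightarrow> finite V \<and> (\<forall>x y. E x y \<longrightarrow> E y x) \<and> (\<forall>x. \<not> E x x)
     \<and> (\<forall>x y. E x y \<longrightarrow> x \<in> V \<and> y \<in> V)"

definition connected_graph :: "'a set \<Rightarrow> ('a \<Rightarrow> 'a \<Rightarrow> bool) \<Rightarrow> bool" where
  "connected_graph V E \<longleftrightarrow> V \<noteq> {} \<and> (\<forall>x\<in>V. \<forall>y\<in>V. (\<lambda>u v. E u v \<and> u \<in> V \<and> v \<in> V)\<^sup>*\<^sup>* x y)"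

definition has_induced :: "'a set \<Rightarrow> ('a \<Rightarrow> 'a \<Rightarrow> bool) \<Rightarrow> nat \<Rightarrow> (nat \<Rightarrow> nat \<Rightarrow> bool) \<Rightarrow> bool" where
  "has_induced V E n H \<longleftrightarrow> (\<exists>f. inj_on f {0..<n} \<and> f ` {0..<n} \<subseteq> V \<and>
      (\<forall>i<n. \<forall>j<n. i \<noteq> j \<longrightarrow> (E (f i) (f j) \<longleftrightarrow> H i j)))"

definition path_graph :: "nat \<Rightarrow> nat \<Rightarrow> bool" where
  "path_graph i j \<longleftrightarrow> i = Suc j \<or> j = Suc i"

definition complete_graph :: "nat \<Rightarrow> nat \<Rightarrow> bool" where
  "complete_graph i j \<longleftrightarrow> i \<noteq> j"

text \<open>SDK_s on 2s+1 vertices: centre 0, subdivision vertices 1..s, leaves s+1..2s;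
  edges 0--i and i--(i+s) for 1 \<le> i \<le> s.\<close>
definition sdk_graph :: "nat \<Rightarrow> nat \<Rightarrow> nat \<Rightarrow> bool" where
  "sdk_graph s i j \<longleftrightarrow>
     (i = 0 \<and> 1 \<le> j \<and> j \<le> s) \<or> (j = 0 \<and> 1 \<le> i \<and> i \<le> s) \<or>
     (1 \<le> i \<and> i \<le> s \<and> j = i + s) \<or> (1 \<le> j \<and> j \<le> s \<and> i = j + s)"

definition P_SDK_K4_free :: "nat \<Rightarrow> nat \<Rightarrow> 'a set \<Rightarrow> ('a \<Rightarrow> 'a \<Rightarrow> bool) \<Rightarrow> bool" where
  "P_SDK_K4_free s t V E \<longleftrightarrow>
     \<not> has_induced V E t path_graph \<and> \<not> has_induced V E (2 * s + 1) (sdk_graph s)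
     \<and> \<not> has_induced V E 4 complete_graph"

definition ramsey_prop :: "nat \<Rightarrow> nat \<Rightarrow> nat \<Rightarrow> bool" where
  "ramsey_prop k l n \<longleftrightarrow> (\<forall>m\<ge>n. \<forall>F :: nat \<Rightarrow> nat \<Rightarrow> bool.
      (\<forall>x y. F x y \<longrightarrow> F y x) \<and> (\<forall>x. \<not> F x x) \<longrightarrow>
      (\<exists>K\<subseteq>{0..<m}. card K = k \<and> (\<forall>x\<in>K. \<forall>y\<in>K. x \<noteq> y \<longrightarrow> F x y)) \<or>
      (\<exists>I\<subseteq>{0..<m}. card I = l \<and> (\<forall>x\<in>I. \<forall>y\<in>I. \<not> F x y)))"

definition ramsey :: "nat \<Rightarrow> nat \<Rightarrow> nat" where
  "ramsey k l = (LEAST n. ramsey_prop k l n)"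

definition nbhd :: "('a \<Rightarrow> 'a \<Rightarrow> bool) \<Rightarrow> 'a set \<Rightarrow> 'a set" where
  "nbhd E X = {v. \<exists>x\<in>X. E x v}"

primrec blocks :: "('a \<Rightarrow> 'a \<Rightarrow> bool) \<Rightarrow> 'a set \<Rightarrow> 'a list \<Rightarrow> nat \<Rightarrow> 'a set list" where
  "blocks E B vs 0 = []"
| "blocks E B vs (Suc j) = blocks E B vs j @ [{v \<in> B - \<Union>(set (blocks E B vs j)). E v (vs ! j)}]"

definition covers :: "('a \<Rightarrow> 'a \<Rightarrow> bool) \<Rightarrow> 'a set \<Rightarrow> 'a set \<Rightarrow> 'a set \<Rightarrow> bool" where
  "covers E W Bj X \<longleftrightarrow> (\<forall>w\<in>W. (\<exists>b\<in>Bj. E w b) \<longrightarrow> (\<exists>x\<in>X. E w x))"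

definition minimal_cover :: "('a \<Rightarrow> 'a \<Rightarrow> bool) \<Rightarrow> 'a set \<Rightarrow> 'a set \<Rightarrow> 'a set \<Rightarrow> bool" where
  "minimal_cover E W Bj X \<longleftrightarrow> X \<subseteq> Bj \<and> covers E W Bj X \<and>
     (\<forall>Y. Y \<subset> X \<longrightarrow> \<not> covers E W Bj Y)"

text \<open>One step S_i \<mapsto> S_{i+1} of the construction (with some enumeration and some
  choice of minimal sets).\<close>
definition constr_step :: "'a set \<Rightarrow> ('a \<Rightarrow> 'a \<Rightarrow> bool) \<Rightarrow> 'a set \<Rightarrow> 'a set \<Rightarrow> bool" where
  "constr_step V E Si Snext \<longleftrightarrow>
    (let B = nbhd E Si; W = V - (B \<union> Si) in
     \<exists>vs Xs. distinct vs \<and> set vs = Si \<and> length Xs = length vs \<and>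
       (\<forall>j<length vs. minimal_cover E W (blocks E B vs (length vs) ! j) (Xs ! j)) \<and>
       Snext = Si \<union> \<Union>(set Xs))"

end

theory Submission
  imports Defs "HOL-Library.Ramsey"
begin


lemma ramsey_ex: "\<exists>n. ramsey_prop k l n"
proof -
  obtain r where r: "\<forall>(V::nat set) (E::nat set set). finite V \<and> card V \<ge> r \<longrightarrow>
    (\<exists>R \<subseteq> V. card R = k \<and> clique R E \<or> card R = l \<and> indep R E)"
    using ramsey2[of k l] by blast
  have "ramsey_prop k l r"
    unfolding ramsey_prop_def
  proof (intro allI impI)
    fix m and F :: "nat \<Rightarrow> nat \<Rightarrow> bool" assume m: "r \<le> m" and F: "(\<forall>x y. F x y \<longrightarrow> F y x) \<and> (\<forall>x. \<not> F x x)"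
    define EE :: "nat set set" where "EE = {{x,y} | x y. F x y}"
    obtain R where R: "R \<subseteq> {0..<m}" "card R = k \<and> clique R EE \<or> card R = l \<and> indep R EE"
      using r[rule_format, of "{0..<m}" EE] m by auto
    have c: "\<And>v w. {v,w} \<in> EE \<Longrightarrow> F v w"
      using F unfolding EE_def by (auto simp: doubleton_eq_iff)
    have d: "\<And>v w. F v w \<Longrightarrow> {v,w} \<in> EE"
      unfolding EE_def by auto
    show "(\<exists>K\<subseteq>{0..<m}. card K = k \<and> (\<forall>x\<in>K. \<forall>y\<in>K. x \<noteq> y \<longrightarrow> F x y)) \<or>
      (\<exists>I\<subseteq>{0..<m}. card I = l \<and> (\<forall>x\<in>I. \<forall>y\<in>I. \<not> F x y))"
    proof (cases "card R = k \<and> clique R EE")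
      case True
      then have "\<forall>x\<in>R. \<forall>y\<in>R. x \<noteq> y \<longrightarrow> F x y" using c unfolding clique_def by blast
      then show ?thesis using R(1) True by blast
    next
      case False
      then have "card R = l" "indep R EE" using R(2) by auto
      have "\<forall>x\<in>R. \<forall>y\<in>R. \<not> F x y"
      proof (intro ballI notI)
        fix x y assume xy: "x \<in> R" "y \<in> R" "F x y"
        then have "x \<noteq> y" using F by auto
        moreover have "{x,y} \<in> EE" using d xy(3) .
        ultimately show False using \<open>indep R EE\<close> xy(1,2) unfolding indep_def by blast
      qed
      then show ?thesis using R(1) \<open>card R = l\<close> by blast
    qed
  qed
  then show ?thesis by blast
qed

lemma ramsey_holds: "ramsey_prop k l (ramsey k l)"
  unfolding ramsey_def using ramsey_ex by (rule LeastI_ex)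

lemma ramsey_apply:
  assumes "finite A" "card A \<ge> ramsey k l" "\<And>x y. R x y \<Longrightarrow> R y x"
  shows "(\<exists>K\<subseteq>A. card K = k \<and> (\<forall>x\<in>K. \<forall>y\<in>K. x \<noteq> y \<longrightarrow> R x y)) \<or>
         (\<exists>I\<subseteq>A. card I = l \<and> (\<forall>x\<in>I. \<forall>y\<in>I. x \<noteq> y \<longrightarrow> \<not> R x y))"
proof -
  obtain h where h: "bij_betw h {0..<card A} A" using ex_bij_betw_nat_finite[OF assms(1)] by blast
  define F where "F = (\<lambda>x y. x \<noteq> y \<and> R (h x) (h y))"
  have F: "(\<forall>x y. F x y \<longrightarrow> F y x) \<and> (\<forall>x. \<not> F x x)" using assms(3) unfolding F_def by auto
  have hi: "inj_on h {0..<card A}" and hA: "h ` {0..<card A} = A" using h by (auto simp: bij_betw_def)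
  from ramsey_holds[of k l, unfolded ramsey_prop_def, rule_format, OF assms(2) F]
  show ?thesis
  proof
    assume "\<exists>K\<subseteq>{0..<card A}. card K = k \<and> (\<forall>x\<in>K. \<forall>y\<in>K. x \<noteq> y \<longrightarrow> F x y)"
    then obtain K where K: "K \<subseteq> {0..<card A}" "card K = k" "\<forall>x\<in>K. \<forall>y\<in>K. x \<noteq> y \<longrightarrow> F x y" by blast
    have "inj_on h K" using hi K(1) inj_on_subset by blast
    then have "card (h ` K) = k" using K(2) card_image by blast
    moreover have "h ` K \<subseteq> A" using K(1) hA by blast
    moreover have "\<forall>x\<in>h ` K. \<forall>y\<in>h ` K. x \<noteq> y \<longrightarrow> R x y" using K(3) unfolding F_def by fastforce
    ultimately show ?thesis by (intro disjI1 exI[of _ "h ` K"]) simp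
  next
    assume "\<exists>I\<subseteq>{0..<card A}. card I = l \<and> (\<forall>x\<in>I. \<forall>y\<in>I. \<not> F x y)"
    then obtain K where K: "K \<subseteq> {0..<card A}" "card K = l" "\<forall>x\<in>K. \<forall>y\<in>K. \<not> F x y" by blast
    have "inj_on h K" using hi K(1) inj_on_subset by blast
    then have "card (h ` K) = l" using K(2) card_image by blast
    moreover have "h ` K \<subseteq> A" using K(1) hA by blast
    moreover have "\<forall>x\<in>h ` K. \<forall>y\<in>h ` K. x \<noteq> y \<longrightarrow> \<not> R x y" using K(3) unfolding F_def by fastforce
    ultimately show ?thesis by (intro disjI2 exI[of _ "h ` K"]) simp
  qed
qed

lemma K4_lemma:
  assumes "K \<subseteq> V" "card K = 4" "\<forall>x\<in>K. \<forall>y\<in>K. x \<noteq> y \<longrightarrow> E x y"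
  shows "has_induced V E 4 complete_graph"
proof -
  have "finite K" using assms(2) card.infinite by force
  then obtain h where h: "bij_betw h {0..<(4::nat)} K" using ex_bij_betw_nat_finite assms(2) by metis
  have hi: "inj_on h {0..<4}" and hK: "h ` {0..<4} = K" using h by (auto simp: bij_betw_def)
  have "\<forall>i<4. \<forall>j<4. i \<noteq> j \<longrightarrow> (E (h i) (h j) \<longleftrightarrow> complete_graph i j)"
  proof (intro allI impI)
    fix i j :: nat assume ij: "i < 4" "j < 4" "i \<noteq> j"
    then have "h i \<noteq> h j" using hi unfolding inj_on_def by auto
    moreover have "h i \<in> K" "h j \<in> K" using ij hK by auto
    ultimately show "E (h i) (h j) \<longleftrightarrow> complete_graph i j"
      using assms(3) ij(3) unfolding complete_graph_def by blast
  qed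
  then show ?thesis unfolding has_induced_def using hi hK assms(1) by blast
qed



lemma SDK_lemma:
  assumes sg: "simple_graph V E"
    and noK4: "\<not> has_induced V E 4 complete_graph"
    and noSDK: "\<not> has_induced V E (2 * s + 1) (sdk_graph s)"
    and c: "c \<in> V" and XV: "X \<subseteq> V" and Xc: "\<forall>x\<in>X. E x c"
    and p: "\<forall>x\<in>X. E (p x) x \<and> \<not> E (p x) c \<and> p x \<noteq> c \<and> p x \<notin> X \<and>
               (\<forall>x'\<in>X. x' \<noteq> x \<longrightarrow> \<not> E (p x) x')"
  shows "card X < ramsey 4 (ramsey 4 s)"
proof (rule ccontr)
  assume "\<not> card X < ramsey 4 (ramsey 4 s)"
  hence ge: "card X \<ge> ramsey 4 (ramsey 4 s)" by simp
  have fin: "finite V" and sym: "\<And>x y. E x y \<Longrightarrow> E y x" and irr: "\<And>x. \<not> E x x"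
    and inV: "\<And>x y. E x y \<Longrightarrow> x \<in> V \<and> y \<in> V"
    using sg unfolding simple_graph_def by blast+
  have finX: "finite X" using finite_subset[OF XV fin] .
  have pinj: "inj_on p X"
  proof (rule inj_onI, rule ccontr)
    fix x y assume xy: "x \<in> X" "y \<in> X" "p x = p y" "x \<noteq> y"
    have "E (p y) y" using p xy(2) by simp
    moreover have "\<not> E (p x) y" using p xy(1,2,4) by simp
    ultimately show False using xy(3) by simp
  qed
  have noclq: "\<not> (\<exists>K\<subseteq>A. card K = 4 \<and> (\<forall>x\<in>K. \<forall>y\<in>K. x \<noteq> y \<longrightarrow> E x y))" if "A \<subseteq> V" for A
  proof
    assume "\<exists>K\<subseteq>A. card K = 4 \<and> (\<forall>x\<in>K. \<forall>y\<in>K. x \<noteq> y \<longrightarrow> E x y)"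
    then obtain K where K: "K \<subseteq> A" "card K = 4" "\<forall>x\<in>K. \<forall>y\<in>K. x \<noteq> y \<longrightarrow> E x y" by blast
    have "K \<subseteq> V" using K(1) that by (rule subset_trans)
    from K4_lemma[OF this K(2,3)] noK4 show False by simp
  qed
  from ramsey_apply[OF finX ge sym]
  have "\<exists>I\<subseteq>X. card I = ramsey 4 s \<and> (\<forall>x\<in>I. \<forall>y\<in>I. x \<noteq> y \<longrightarrow> \<not> E x y)"
  proof
    assume "\<exists>K\<subseteq>X. card K = 4 \<and> (\<forall>x\<in>K. \<forall>y\<in>K. x \<noteq> y \<longrightarrow> E x y)"
    with noclq[OF XV] show ?thesis by simp
  qed
  then obtain I where I: "I \<subseteq> X" "card I = ramsey 4 s" "\<forall>x\<in>I. \<forall>y\<in>I. x \<noteq> y \<longrightarrow> \<not> E x y"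
    by auto
  have pE: "\<And>x. x \<in> X \<Longrightarrow> E (p x) x" using p by simp
  have pc: "\<And>x. x \<in> X \<Longrightarrow> \<not> E (p x) c" using p by simp
  have pnc: "\<And>x. x \<in> X \<Longrightarrow> p x \<noteq> c" using p by simp
  have pX: "\<And>x. x \<in> X \<Longrightarrow> p x \<notin> X" using p by simp
  have ppriv: "\<And>x x'. x \<in> X \<Longrightarrow> x' \<in> X \<Longrightarrow> x' \<noteq> x \<Longrightarrow> \<not> E (p x) x'" using p by simp
  have pIV: "p ` I \<subseteq> V" using pE I(1) inV by auto
  have "inj_on p I" using pinj I(1) by (rule inj_on_subset)
  then have cpI: "card (p ` I) = ramsey 4 s" using I(2) by (simp add: card_image)
  have finpI: "finite (p ` I)" using finite_subset[OF pIV fin] .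
  have ge2: "card (p ` I) \<ge> ramsey 4 s" using cpI by simp
  from ramsey_apply[OF finpI ge2 sym]
  have "\<exists>J'\<subseteq>p ` I. card J' = s \<and> (\<forall>x\<in>J'. \<forall>y\<in>J'. x \<noteq> y \<longrightarrow> \<not> E x y)"
  proof
    assume "\<exists>K\<subseteq>p ` I. card K = 4 \<and> (\<forall>x\<in>K. \<forall>y\<in>K. x \<noteq> y \<longrightarrow> E x y)"
    with noclq[OF pIV] show ?thesis by simp
  qed simp
  then obtain J' where J': "J' \<subseteq> p ` I" "card J' = s" "\<forall>x\<in>J'. \<forall>y\<in>J'. x \<noteq> y \<longrightarrow> \<not> E x y"
    by auto
  define J where "J = {x\<in>I. p x \<in> J'}"
  have JI: "J \<subseteq> I" unfolding J_def by blast
  have pJ: "p ` J = J'" using J'(1) unfolding J_def by blast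
  have pinjJ: "inj_on p J" using inj_on_subset[OF pinj subset_trans[OF JI I(1)]] .
  have cJ: "card J = s" using card_image[OF pinjJ] pJ J'(2) by simp
  have JX: "J \<subseteq> X" using JI I(1) by (rule subset_trans)
  have finJ: "finite J" using finite_subset[OF JX finX] .
  obtain h where h: "bij_betw h {0..<s} J" using ex_bij_betw_nat_finite[OF finJ] unfolding cJ by (elim exE)
  have hJ: "\<And>i. i < s \<Longrightarrow> h i \<in> J" using h unfolding bij_betw_def by auto
  have hJ1: "\<And>k. 1 \<le> k \<and> k \<le> s \<Longrightarrow> h (k - 1) \<in> J" using hJ by (metis Suc_le_eq Suc_pred' le_less_trans less_one not_le)
  have hJ2: "\<And>k. s < k \<Longrightarrow> k < 2*s+1 \<Longrightarrow> h (k - Suc s) \<in> J"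
  proof -
    fix k assume "s < k" "k < 2*s+1"
    then have "k - Suc s < s" by linarith
    then show "h (k - Suc s) \<in> J" by (rule hJ)
  qed
  have hinj: "\<And>i j. i < s \<Longrightarrow> j < s \<Longrightarrow> h i = h j \<longleftrightarrow> i = j"
    using h unfolding bij_betw_def inj_on_def by auto
  have F1: "\<And>x. x \<in> J \<Longrightarrow> E c x \<and> E x c" using Xc JX sym by auto
  have F2: "\<And>x. x \<in> J \<Longrightarrow> \<not> E c (p x) \<and> \<not> E (p x) c" using pc JX sym by auto
  have F3: "\<And>x y. x \<in> J \<Longrightarrow> y \<in> J \<Longrightarrow> x \<noteq> y \<Longrightarrow> \<not> E x y" using I(3) JI by auto
  have F4: "\<And>x y. x \<in> J \<Longrightarrow> y \<in> J \<Longrightarrow> (E x (p y) \<longleftrightarrow> x = y) \<and> (E (p y) x \<longleftrightarrow> x = y)"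
  proof -
    fix x y assume xy: "x \<in> J" "y \<in> J"
    have "E (p y) x \<longleftrightarrow> x = y"
    proof (cases "x = y")
      case True then show ?thesis using pE xy JX by auto
    next
      case False then show ?thesis using ppriv[of y x] xy JX by auto
    qed
    then show "(E x (p y) \<longleftrightarrow> x = y) \<and> (E (p y) x \<longleftrightarrow> x = y)" using sym by auto
  qed
  have F5: "\<And>x y. x \<in> J \<Longrightarrow> y \<in> J \<Longrightarrow> x \<noteq> y \<Longrightarrow> \<not> E (p x) (p y)"
  proof -
    fix x y assume xy: "x \<in> J" "y \<in> J" "x \<noteq> y"
    have "p x \<noteq> p y" using pinjJ xy unfolding inj_on_def by auto
    moreover have "p x \<in> J'" "p y \<in> J'" using pJ xy by auto
    ultimately show "\<not> E (p x) (p y)" using J'(3) by auto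
  qed
  have D1: "\<And>x. x \<in> J \<Longrightarrow> x \<noteq> c \<and> p x \<noteq> c" using F1 irr pnc JX by auto
  have D2: "\<And>x y. x \<in> J \<Longrightarrow> y \<in> J \<Longrightarrow> x \<noteq> p y" using pX JX by auto
  define f where "f = (\<lambda>i. if i = 0 then c else if i \<le> s then h (i - 1) else p (h (i - Suc s)))"
  have fV: "f ` {0..<2*s+1} \<subseteq> V"
  proof
    fix v assume "v \<in> f ` {0..<2*s+1}"
    then obtain i where i: "i < 2*s+1" "v = f i" by auto
    have "x \<in> V \<and> p x \<in> V" if "x \<in> J" for x
    proof -
      have xX: "x \<in> X" using that JX by auto
      show ?thesis using inV[OF pE[OF xX]] by simp
    qed
    then show "v \<in> V" using i c hJ1 hJ2 unfolding f_def by auto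
  qed
  have adj: "E (f i) (f j) \<longleftrightarrow> sdk_graph s i j" if ij: "i < 2*s+1" "j < 2*s+1" "i \<noteq> j" for i j
  proof -
    consider "i = 0" | "1 \<le> i \<and> i \<le> s" | "s < i" by linarith
    then show ?thesis
    proof cases
      case 1
      then have fi: "f i = c" by (simp add: f_def)
      consider "1 \<le> j \<and> j \<le> s" | "s < j" using ij 1 by linarith
      then show ?thesis
      proof cases
        case 1
        then have "f j = h (j - 1)" by (simp add: f_def)
        moreover have "h (j - 1) \<in> J" using hJ1 1 by simp
        ultimately show ?thesis using fi F1 \<open>i = 0\<close> 1 by (simp add: sdk_graph_def)
      next
        case 2
        then have "f j = p (h (j - Suc s))" by (simp add: f_def)
        moreover have "h (j - Suc s) \<in> J" using hJ2 2 ij by simp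
        ultimately show ?thesis using fi F2 \<open>i = 0\<close> 2 by (simp add: sdk_graph_def)
      qed
    next
      case 2
      then have fi: "f i = h (i - 1)" and hi: "h (i - 1) \<in> J" using hJ1 by (simp_all add: f_def)
      consider "j = 0" | "1 \<le> j \<and> j \<le> s" | "s < j" by linarith
      then show ?thesis
      proof cases
        case 1
        then have "f j = c" by (simp add: f_def)
        then show ?thesis using fi hi F1 2 1 by (simp add: sdk_graph_def)
      next
        case 3
        then have fj: "f j = p (h (j - Suc s))" by (simp add: f_def)
        have hj: "h (j - Suc s) \<in> J" using hJ2 3 ij by simp
        have "E (f i) (f j) \<longleftrightarrow> h (i - 1) = h (j - Suc s)" using fi fj F4[OF hi hj] by simp
        also have "\<dots> \<longleftrightarrow> i - 1 = j - Suc s" using 2 3 ij by (intro hinj) linarith+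
        also have "\<dots> \<longleftrightarrow> sdk_graph s i j" using 2 3 by (auto simp: sdk_graph_def)
        finally show ?thesis .
      next
        case 4: 2
        then have fj: "f j = h (j - 1)" and hj: "h (j - 1) \<in> J" using hJ1 by (simp_all add: f_def)
        have "i - 1 \<noteq> j - 1" using 2 4 ij by linarith
        then have "h (i - 1) \<noteq> h (j - 1)" using 2 4 ij hinj[of "i - 1" "j - 1"] by linarith
        then show ?thesis using fi fj F3[OF hi hj] 2 4 by (auto simp: sdk_graph_def)
      qed
    next
      case 3
      then have fi: "f i = p (h (i - Suc s))" and hi: "h (i - Suc s) \<in> J" using hJ2 ij by (simp_all add: f_def)
      consider "j = 0" | "1 \<le> j \<and> j \<le> s" | "s < j" by linarith
      then show ?thesis
      proof cases
        case 1
        then have "f j = c" by (simp add: f_def)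
        then show ?thesis using fi hi F2 3 1 by (simp add: sdk_graph_def)
      next
        case 2
        then have fj: "f j = h (j - 1)" and hj: "h (j - 1) \<in> J" using hJ1 by (simp_all add: f_def)
        have "E (f i) (f j) \<longleftrightarrow> h (j - 1) = h (i - Suc s)" using fi fj F4[OF hj hi] by simp
        also have "\<dots> \<longleftrightarrow> j - 1 = i - Suc s" using 2 3 ij by (intro hinj) linarith+
        also have "\<dots> \<longleftrightarrow> sdk_graph s i j" using 2 3 by (auto simp: sdk_graph_def)
        finally show ?thesis .
      next
        case 4: 3
        then have fj: "f j = p (h (j - Suc s))" and hj: "h (j - Suc s) \<in> J" using hJ2 ij by (simp_all add: f_def)
        have "i - Suc s \<noteq> j - Suc s" using 3 4 ij by linarith
        then have "h (i - Suc s) \<noteq> h (j - Suc s)" using 3 4 ij hinj[of "i - Suc s" "j - Suc s"] by linarith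
        then show ?thesis using fi fj F5[OF hi hj] 3 4 by (auto simp: sdk_graph_def)
      qed
    qed
  qed
  have finj: "inj_on f {0..<2*s+1}"
  proof (rule inj_onI, rule ccontr)
    fix i j assume ij: "i \<in> {0..<2*s+1}" "j \<in> {0..<2*s+1}" "f i = f j" "i \<noteq> j"
    have cls: "(k = 0 \<and> f k = c) \<or> (1 \<le> k \<and> k \<le> s \<and> f k = h (k - 1) \<and> h (k - 1) \<in> J)
       \<or> (s < k \<and> f k = p (h (k - Suc s)) \<and> h (k - Suc s) \<in> J)" if "k < 2*s+1" for k
      using that hJ1 hJ2 unfolding f_def by auto
    have ci: "(i = 0 \<and> f i = c) \<or> (1 \<le> i \<and> i \<le> s \<and> f i = h (i - 1) \<and> h (i - 1) \<in> J)
       \<or> (s < i \<and> f i = p (h (i - Suc s)) \<and> h (i - Suc s) \<in> J)" using cls ij(1) by simp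
    have cj: "(j = 0 \<and> f j = c) \<or> (1 \<le> j \<and> j \<le> s \<and> f j = h (j - 1) \<and> h (j - 1) \<in> J)
       \<or> (s < j \<and> f j = p (h (j - Suc s)) \<and> h (j - Suc s) \<in> J)" using cls ij(2) by simp
    have hI1: "i = j" if "1 \<le> i" "i \<le> s" "1 \<le> j" "j \<le> s" "h (i - 1) = h (j - 1)"
    proof -
      have "i - 1 = j - 1" using that hinj[of "i - 1" "j - 1"] by linarith
      then show ?thesis using that by linarith
    qed
    have hI2: "i = j" if "s < i" "s < j" "p (h (i - Suc s)) = p (h (j - Suc s))"
    proof -
      have "h (i - Suc s) \<in> J" "h (j - Suc s) \<in> J" using hJ2 that ij by auto
      then have "h (i - Suc s) = h (j - Suc s)" using pinjJ that(3) unfolding inj_on_def by blast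
      then have "i - Suc s = j - Suc s" using that ij hinj[of "i - Suc s" "j - Suc s"] by auto
      then show ?thesis using that by linarith
    qed
    have D1': "\<And>x. x \<in> J \<Longrightarrow> c \<noteq> x \<and> c \<noteq> p x" using D1 by metis
    have D2': "\<And>x y. x \<in> J \<Longrightarrow> y \<in> J \<Longrightarrow> p y \<noteq> x" using D2 by metis
    from ci cj show False
      by (elim disjE conjE) (use D1 D2 D1' D2' hI1 hI2 ij in auto)
  qed
  have "has_induced V E (2 * s + 1) (sdk_graph s)"
    unfolding has_induced_def using finj fV adj by auto
  then show False using noSDK by blast
qed



lemma blocks_length: "length (blocks E B vs n) = n"
  by (induction n) auto

lemma blocks_nth: "j < n \<Longrightarrow> blocks E B vs n ! j = {v \<in> B - \<Union>(set (blocks E B vs j)). E v (vs ! j)}"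
proof (induction n)
  case 0 then show ?case by simp
next
  case (Suc n)
  show ?case
  proof (cases "j < n")
    case True
    then show ?thesis using Suc by (simp add: nth_append blocks_length)
  next
    case False
    then have "j = n" using Suc.prems by simp
    then show ?thesis by (simp add: nth_append blocks_length)
  qed
qed

lemma blocks_sub: "j < n \<Longrightarrow> blocks E B vs n ! j \<subseteq> {v \<in> B. E v (vs ! j)}"
proof -
  assume "j < n"
  then have "blocks E B vs n ! j = {v \<in> B - \<Union>(set (blocks E B vs j)). E v (vs ! j)}"
    by (rule blocks_nth)
  then show ?thesis by auto
qed

lemma blocks_union: "\<Union>(set (blocks E B vs n)) = {v \<in> B. \<exists>j<n. E v (vs ! j)}"
proof (induction n)
  case 0 then show ?case by simp
next
  case (Suc n)
  have "\<Union>(set (blocks E B vs (Suc n))) = \<Union>(set (blocks E B vs n)) \<union> {v \<in> B. E v (vs ! n)}"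
    by auto
  also have "\<dots> = {v \<in> B. \<exists>j<Suc n. E v (vs ! j)}" using Suc.IH less_Suc_eq by auto
  finally show ?case .
qed

lemma cs_D:
  assumes "constr_step V E Si Sn"
  obtains vs Xs where "distinct vs" "set vs = Si" "length Xs = length vs"
    "\<And>j. j < length vs \<Longrightarrow> minimal_cover E (V - (nbhd E Si \<union> Si)) (blocks E (nbhd E Si) vs (length vs) ! j) (Xs ! j)"
    "Sn = Si \<union> \<Union>(set Xs)"
proof -
  have "\<exists>vs Xs. distinct vs \<and> set vs = Si \<and> length Xs = length vs \<and>
       (\<forall>j<length vs. minimal_cover E (V - (nbhd E Si \<union> Si)) (blocks E (nbhd E Si) vs (length vs) ! j) (Xs ! j)) \<and>
       Sn = Si \<union> \<Union>(set Xs)" using assms unfolding constr_step_def Let_def by assumption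
  then obtain vs Xs where H: "distinct vs" "set vs = Si" "length Xs = length vs"
       "\<forall>j<length vs. minimal_cover E (V - (nbhd E Si \<union> Si)) (blocks E (nbhd E Si) vs (length vs) ! j) (Xs ! j)"
       "Sn = Si \<union> \<Union>(set Xs)" by (elim exE conjE)
  show thesis by (rule that[OF H(1) H(2) H(3) _ H(5)]) (use H(4) in simp)
qed

lemma cs_sub: "constr_step V E Si Sn \<Longrightarrow> Si \<subseteq> Sn"
  by (erule cs_D) simp

lemma cs_new:
  assumes "constr_step V E Si Sn"
  shows "Sn - Si \<subseteq> nbhd E Si"
proof -
  obtain vs Xs where D: "distinct vs" "set vs = Si" "length Xs = length vs"
    "\<And>j. j < length vs \<Longrightarrow> minimal_cover E (V - (nbhd E Si \<union> Si)) (blocks E (nbhd E Si) vs (length vs) ! j) (Xs ! j)"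
    "Sn = Si \<union> \<Union>(set Xs)" by (rule cs_D[OF assms]) (rule that)
  have "Xs ! j \<subseteq> nbhd E Si" if "j < length Xs" for j
  proof -
    have "Xs ! j \<subseteq> blocks E (nbhd E Si) vs (length vs) ! j"
      using D(3,4) that unfolding minimal_cover_def by auto
    also have "\<dots> \<subseteq> nbhd E Si" using blocks_sub[where j=j and n="length vs" and E=E and B="nbhd E Si" and vs=vs] that D(3) by auto
    finally show ?thesis .
  qed
  note XB = this
  show ?thesis
  proof
    fix x assume "x \<in> Sn - Si"
    then obtain X where X: "X \<in> set Xs" "x \<in> X" using D(5) by auto
    then obtain j where j: "j < length Xs" "X = Xs ! j" by (auto simp: in_set_conv_nth)
    have "x \<in> Xs ! j" using X(2) j(2) by simp
    then show "x \<in> nbhd E Si" using XB[OF j(1)] by (rule subsetD[rotated])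
  qed
qed

lemma nbhd_V: "simple_graph V E \<Longrightarrow> nbhd E X \<subseteq> V"
  unfolding simple_graph_def nbhd_def by auto

lemma cs_V:
  assumes "simple_graph V E" "constr_step V E Si Sn" "Si \<subseteq> V"
  shows "Sn \<subseteq> V"
proof
  fix x assume x: "x \<in> Sn"
  show "x \<in> V"
  proof (cases "x \<in> Si")
    case True then show ?thesis using assms(3) by (rule subsetD[rotated])
  next
    case False then have "x \<in> nbhd E Si" using cs_new[OF assms(2)] x by auto
    then show ?thesis using nbhd_V[OF assms(1), of Si] by (rule subsetD[rotated])
  qed
qed

lemma cs_dom:
  assumes cs: "constr_step V E Si Sn"
    and u: "u \<in> V - (nbhd E Si \<union> Si)" and y: "y \<in> nbhd E Si" and uy: "E u y"
    and sym: "\<And>x y. E x y \<Longrightarrow> E y x"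
  shows "\<exists>x\<in>Sn. E u x"
proof -
  obtain vs Xs where D: "distinct vs" "set vs = Si" "length Xs = length vs"
    "\<And>j. j < length vs \<Longrightarrow> minimal_cover E (V - (nbhd E Si \<union> Si)) (blocks E (nbhd E Si) vs (length vs) ! j) (Xs ! j)"
    "Sn = Si \<union> \<Union>(set Xs)" by (rule cs_D[OF cs]) (rule that)
  obtain x where x: "x \<in> Si" "E x y" using y unfolding nbhd_def by auto
  obtain j where j: "j < length vs" "vs ! j = x" using x(1) D(2) by (auto simp: in_set_conv_nth)
  have "y \<in> \<Union>(set (blocks E (nbhd E Si) vs (length vs)))"
    unfolding blocks_union using y j sym[OF x(2)] by auto
  then obtain j' where j': "j' < length vs" "y \<in> blocks E (nbhd E Si) vs (length vs) ! j'"
    by (auto simp: in_set_conv_nth blocks_length)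
  have "covers E (V - (nbhd E Si \<union> Si)) (blocks E (nbhd E Si) vs (length vs) ! j') (Xs ! j')"
    using D(4)[OF j'(1)] unfolding minimal_cover_def by simp
  then obtain x' where x': "x' \<in> Xs ! j'" "E u x'" using u uy j'(2) unfolding covers_def by blast
  have "Xs ! j' \<in> set Xs" using j'(1) D(3) by simp
  then have "x' \<in> Sn" using x'(1) D(5) by auto
  then show ?thesis using x'(2) by auto
qed



lemma cs_card:
  assumes sg: "simple_graph V E"
    and noK4: "\<not> has_induced V E 4 complete_graph"
    and noSDK: "\<not> has_induced V E (2 * s + 1) (sdk_graph s)"
    and cs: "constr_step V E Si Sn" and SiV: "Si \<subseteq> V"
  shows "card Sn \<le> card Si * (1 + ramsey 4 (ramsey 4 s))"
proof -
  obtain vs Xs where D: "distinct vs" "set vs = Si" "length Xs = length vs"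
    "\<And>j. j < length vs \<Longrightarrow> minimal_cover E (V - (nbhd E Si \<union> Si)) (blocks E (nbhd E Si) vs (length vs) ! j) (Xs ! j)"
    "Sn = Si \<union> \<Union>(set Xs)" by (rule cs_D[OF cs]) (rule that)
  define R where "R = ramsey 4 (ramsey 4 s)"
  define W where "W = V - (nbhd E Si \<union> Si)"
  have sym: "\<And>x y. E x y \<Longrightarrow> E y x" and irr: "\<And>x. \<not> E x x"
    and inV: "\<And>x y. E x y \<Longrightarrow> x \<in> V \<and> y \<in> V"
    using sg unfolding simple_graph_def by blast+
  have Xb: "card (Xs ! j) \<le> R" if j: "j < length vs" for j
  proof -
    define Bj where "Bj = blocks E (nbhd E Si) vs (length vs) ! j"
    define X where "X = Xs ! j"
    define c where "c = vs ! j"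
    have mc: "minimal_cover E W Bj X" using D(4)[OF j] unfolding W_def Bj_def X_def .
    have XBj: "X \<subseteq> Bj" and cov: "covers E W Bj X" and mini: "\<And>Y. Y \<subset> X \<Longrightarrow> \<not> covers E W Bj Y"
      using mc unfolding minimal_cover_def by auto
    have Bj: "Bj \<subseteq> {v \<in> nbhd E Si. E v c}" unfolding Bj_def c_def by (rule blocks_sub) (rule j)
    have cS: "c \<in> Si" using j D(2) unfolding c_def by auto
    have cV: "c \<in> V" using cS SiV by auto
    have XB: "X \<subseteq> nbhd E Si" using XBj Bj by auto
    have XV: "X \<subseteq> V" using XB nbhd_V[OF sg, of Si] by auto
    have Xc: "\<forall>x\<in>X. E x c" using XBj Bj by auto
    have priv: "\<forall>x\<in>X. \<exists>w. E w x \<and> \<not> E w c \<and> w \<noteq> c \<and> w \<notin> X \<and> (\<forall>x'\<in>X. x' \<noteq> x \<longrightarrow> \<not> E w x')"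
    proof
      fix x assume x: "x \<in> X"
      have "X - {x} \<subset> X" using x by auto
      then have "\<not> covers E W Bj (X - {x})" by (rule mini)
      then obtain w where w: "w \<in> W" "\<exists>b\<in>Bj. E w b" "\<not> (\<exists>x'\<in>X - {x}. E w x')"
        unfolding covers_def by auto
      then obtain x'' where x'': "x'' \<in> X" "E w x''" using cov unfolding covers_def by auto
      then have "x'' = x" using w(3) by auto
      then have wx: "E w x" using x'' by simp
      have wB: "w \<notin> nbhd E Si" "w \<notin> Si" using w(1) unfolding W_def by auto
      have wc: "\<not> E w c"
      proof
        assume "E w c"
        then have "E c w" by (rule sym)
        then have "w \<in> nbhd E Si" using cS unfolding nbhd_def by auto
        then show False using wB by simp
      qed
      have "w \<noteq> c" using wB(2) cS by auto
      moreover have "w \<notin> X" using wB(1) XB by auto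
      moreover have "\<forall>x'\<in>X. x' \<noteq> x \<longrightarrow> \<not> E w x'" using w(3) by auto
      ultimately show "\<exists>w. E w x \<and> \<not> E w c \<and> w \<noteq> c \<and> w \<notin> X \<and> (\<forall>x'\<in>X. x' \<noteq> x \<longrightarrow> \<not> E w x')"
        using wx wc by auto
    qed
    obtain p where p: "\<forall>x\<in>X. E (p x) x \<and> \<not> E (p x) c \<and> p x \<noteq> c \<and> p x \<notin> X \<and> (\<forall>x'\<in>X. x' \<noteq> x \<longrightarrow> \<not> E (p x) x')"
      using bchoice[OF priv] by (elim exE)
    have "card X < R" unfolding R_def by (rule SDK_lemma[OF sg noK4 noSDK cV XV Xc p])
    then show ?thesis unfolding X_def by simp
  qed
  have U: "\<Union>(set Xs) = (\<Union>j\<in>{..<length Xs}. Xs ! j)" by (auto simp: set_conv_nth)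
  have "card (\<Union>(set Xs)) \<le> (\<Sum>j<length Xs. card (Xs ! j))" unfolding U by (rule card_UN_le) simp
  also have "\<dots> \<le> length Xs * R"
  proof -
    have "(\<Sum>j<length Xs. card (Xs ! j)) \<le> of_nat (card {..<length Xs}) * R"
      by (rule sum_bounded_above) (use Xb D(3) in auto)
    then show ?thesis by simp
  qed
  finally have cU: "card (\<Union>(set Xs)) \<le> length Xs * R" .
  have "card Sn \<le> card Si + card (\<Union>(set Xs))" unfolding D(5) by (rule card_Un_le)
  moreover have "card Si = length Xs" using distinct_card[OF D(1)] D(2,3) by simp
  ultimately have "card Sn \<le> card Si + card Si * R" using cU by simp
  then show ?thesis unfolding R_def by (simp add: algebra_simps)
qed

definition ipath :: "('a \<Rightarrow> 'a \<Rightarrow> bool) \<Rightarrow> 'a list \<Rightarrow> bool" where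
  "ipath E ps \<longleftrightarrow> distinct ps \<and> (\<forall>i<length ps. \<forall>j<length ps. i \<noteq> j \<longrightarrow> (E (ps ! i) (ps ! j) \<longleftrightarrow> path_graph i j))"

lemma ipath_single: "ipath E [a]"
  unfolding ipath_def by auto

lemma ipath_snoc:
  assumes sym: "\<And>x y. E x y \<Longrightarrow> E y x"
    and ip: "ipath E ps" and ne: "ps \<noteq> []" and u: "u \<notin> set ps" and lu: "E (last ps) u"
    and nb: "\<forall>v\<in>set (butlast ps). \<not> E v u"
  shows "ipath E (ps @ [u])"
proof -
  define n where "n = length ps"
  have n0: "n > 0" using ne unfolding n_def by simp
  have adj: "E u (ps ! j) \<longleftrightarrow> j = n - 1" if j: "j < n" for j
  proof (cases "j = n - 1")
    case True
    then have "ps ! j = last ps" using ne unfolding n_def by (simp add: last_conv_nth)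
    then show ?thesis using lu sym True by auto
  next
    case False
    then have "j < length (butlast ps)" using j unfolding n_def by simp
    then have "butlast ps ! j \<in> set (butlast ps)" by (rule nth_mem)
    moreover have "butlast ps ! j = ps ! j" using \<open>j < length (butlast ps)\<close> by (simp add: nth_butlast)
    ultimately have "\<not> E (ps ! j) u" using nb by auto
    then show ?thesis using sym False by auto
  qed
  have ipd: "distinct ps" and ipe: "\<And>i j. i < n \<Longrightarrow> j < n \<Longrightarrow> i \<noteq> j \<Longrightarrow> (E (ps ! i) (ps ! j) \<longleftrightarrow> path_graph i j)"
    using ip unfolding ipath_def n_def by auto
  show ?thesis unfolding ipath_def
  proof (intro conjI allI impI)
    show "distinct (ps @ [u])" using ipd u by simp
  next
    fix i j assume ij: "i < length (ps @ [u])" "j < length (ps @ [u])" "i \<noteq> j"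
    then have ij': "i < Suc n" "j < Suc n" unfolding n_def by auto
    consider "i < n" "j < n" | "i = n" "j < n" | "i < n" "j = n" using ij' ij(3) by linarith
    then show "E ((ps @ [u]) ! i) ((ps @ [u]) ! j) \<longleftrightarrow> path_graph i j"
    proof cases
      case 1
      then show ?thesis using ipe[OF 1 ij(3)] unfolding n_def by (simp add: nth_append)
    next
      case 2
      have "E u (ps ! j) \<longleftrightarrow> path_graph i j" using adj[OF 2(2)] 2 n0 unfolding path_graph_def by auto
      then show ?thesis using 2 unfolding n_def by (simp add: nth_append)
    next
      case 3
      have "E (ps ! i) u \<longleftrightarrow> path_graph i j" using adj[OF 3(1)] sym 3 n0 unfolding path_graph_def by auto
      then show ?thesis using 3 unfolding n_def by (simp add: nth_append)
    qed
  qed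
qed

lemma ipath_induced:
  assumes "ipath E ps" "t \<le> length ps" "set ps \<subseteq> V"
  shows "has_induced V E t path_graph"
  unfolding has_induced_def
proof (intro exI conjI)
  show "inj_on (nth ps) {0..<t}" using assms(1,2) unfolding ipath_def by (intro inj_on_nth) auto
  show "(!) ps ` {0..<t} \<subseteq> V" using assms(2,3) by auto
  show "\<forall>i<t. \<forall>j<t. i \<noteq> j \<longrightarrow> (E (ps ! i) (ps ! j) \<longleftrightarrow> path_graph i j)"
    using assms(1,2) unfolding ipath_def by auto
qed

lemma rtranclp_cross:
  assumes "R\<^sup>*\<^sup>* x y" "x \<in> T" "y \<notin> T"
  shows "\<exists>u v. R u v \<and> u \<in> T \<and> v \<notin> T"
  using assms
proof (induction rule: rtranclp_induct)
  case base then show ?case by simp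
next
  case (step y z)
  show ?case
  proof (cases "y \<in> T")
    case True then show ?thesis using step by auto
  next
    case False then show ?thesis using step by auto
  qed
qed



theorem lemma3p3:
  fixes V :: "'a set" and E :: "'a \<Rightarrow> 'a \<Rightarrow> bool" and s t :: nat and a :: 'a
    and S :: "nat \<Rightarrow> 'a set"
  assumes "1 \<le> s" and "2 \<le> t"
    and "simple_graph V E" and "connected_graph V E" and "P_SDK_K4_free s t V E"
    and "a \<in> V"
    and "S 1 = {a}"
    and "\<And>i. 1 \<le> i \<Longrightarrow> i \<le> t - 2 \<Longrightarrow> constr_step V E (S i) (S (Suc i))"
  shows "card (S (t - 1)) \<le> (1 + ramsey 4 (ramsey 4 s)) ^ (t - 2)
     \<and> V - (S (t - 1) \<union> nbhd E (S (t - 1))) = {}"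
proof -
  have sg: "simple_graph V E" using assms(3) .
  have sym: "\<And>x y. E x y \<Longrightarrow> E y x" and irr: "\<And>x. \<not> E x x"
    and inV: "\<And>x y. E x y \<Longrightarrow> x \<in> V \<and> y \<in> V"
    using sg unfolding simple_graph_def by blast+
  have noP: "\<not> has_induced V E t path_graph" and noSDK: "\<not> has_induced V E (2 * s + 1) (sdk_graph s)"
    and noK4: "\<not> has_induced V E 4 complete_graph"
    using assms(5) unfolding P_SDK_K4_free_def by auto
  define R where "R = ramsey 4 (ramsey 4 s)"
  define W where "W k = V - (nbhd E (S k) \<union> S k)" for k
  have step: "\<And>k. 1 \<le> k \<Longrightarrow> k \<le> t - 2 \<Longrightarrow> constr_step V E (S k) (S (Suc k))" using assms(8) .
  have basic: "1 \<le> k \<Longrightarrow> k \<le> t - 1 \<Longrightarrow> S k \<subseteq> V \<and> a \<in> S k \<and> card (S k) \<le> (1 + R) ^ (k - 1)" for k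
  proof (induction k)
    case 0 then show ?case by simp
  next
    case (Suc k)
    show ?case
    proof (cases "k = 0")
      case True then show ?thesis using assms(6,7) by simp
    next
      case False
      then have k1: "1 \<le> k" "k \<le> t - 1" "k \<le> t - 2" using Suc.prems by auto
      have IH: "S k \<subseteq> V" "a \<in> S k" "card (S k) \<le> (1 + R) ^ (k - 1)" using Suc.IH[OF k1(1,2)] by auto
      have cs: "constr_step V E (S k) (S (Suc k))" using step k1 by simp
      have "S (Suc k) \<subseteq> V" by (rule cs_V[OF sg cs IH(1)])
      moreover have "a \<in> S (Suc k)" using cs_sub[OF cs] IH(2) by auto
      moreover have "card (S (Suc k)) \<le> (1 + R) ^ (Suc k - 1)"
      proof -
        have "card (S (Suc k)) \<le> card (S k) * (1 + R)" unfolding R_def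
          by (rule cs_card[OF sg noK4 noSDK cs IH(1)])
        also have "\<dots> \<le> (1 + R) ^ (k - 1) * (1 + R)" using IH(3) by (rule mult_right_mono) simp
        also have "\<dots> = (1 + R) ^ (Suc k - 1)" using k1(1)
          by (cases k) (simp_all add: power_Suc2)
        finally show ?thesis .
      qed
      ultimately show ?thesis by simp
    qed
  qed
  have t1: "1 \<le> t - 1" using assms(2) by simp
  have part1: "card (S (t - 1)) \<le> (1 + R) ^ (t - 2)"
  proof -
    have "card (S (t - 1)) \<le> (1 + R) ^ (t - 1 - 1)" using basic[OF t1 order_refl] by simp
    moreover have "t - 1 - 1 = t - 2" by simp
    ultimately show ?thesis by simp
  qed
  have PL: "1 \<le> k \<Longrightarrow> k \<le> t - 1 \<Longrightarrow> \<forall>u y. u \<in> W k \<longrightarrow> y \<in> nbhd E (S k) \<longrightarrow> E u y \<longrightarrow>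
     (\<exists>qs. ipath E (qs @ [y, u]) \<and> length qs = k \<and> set qs \<subseteq> S k)" for k
  proof (induction k)
    case 0 then show ?case by simp
  next
    case (Suc k)
    show ?case
    proof (cases "k = 0")
      case True
      show ?thesis
      proof (intro allI impI)
        fix u y assume u: "u \<in> W (Suc k)" and y: "y \<in> nbhd E (S (Suc k))" and uy: "E u y"
        have S1: "S (Suc k) = {a}" using True assms(7) by simp
        have ay: "E a y" using y S1 unfolding nbhd_def by auto
        have au: "\<not> E a u" using u S1 unfolding W_def nbhd_def by auto
        have ua: "u \<noteq> a" using u S1 unfolding W_def by auto
        have ya: "y \<noteq> a" using ay irr by auto
        have uy': "u \<noteq> y" using uy irr by auto
        have p1: "ipath E ([a] @ [y])"
          by (rule ipath_snoc[OF sym ipath_single]) (use ay ya in auto)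
        have p2: "ipath E ([a, y] @ [u])"
          by (rule ipath_snoc[OF sym]) (use p1 sym[OF uy] au ua uy' in auto)
        show "\<exists>qs. ipath E (qs @ [y, u]) \<and> length qs = Suc k \<and> set qs \<subseteq> S (Suc k)"
          by (rule exI[of _ "[a]"]) (use p2 S1 True in simp)
      qed
    next
      case False
      then have k1: "1 \<le> k" "k \<le> t - 1" "k \<le> t - 2" using Suc.prems by auto
      have IH: "\<forall>u y. u \<in> W k \<longrightarrow> y \<in> nbhd E (S k) \<longrightarrow> E u y \<longrightarrow>
         (\<exists>qs. ipath E (qs @ [y, u]) \<and> length qs = k \<and> set qs \<subseteq> S k)" using Suc.IH[OF k1(1,2)] .
      have cs: "constr_step V E (S k) (S (Suc k))" using step k1 by simp
      have sub: "S k \<subseteq> S (Suc k)" by (rule cs_sub[OF cs])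
      have nsub: "nbhd E (S k) \<subseteq> nbhd E (S (Suc k))" using sub unfolding nbhd_def by auto
      show ?thesis
      proof (intro allI impI)
        fix u y assume u: "u \<in> W (Suc k)" and y: "y \<in> nbhd E (S (Suc k))" and uy: "E u y"
        have uN: "u \<notin> nbhd E (S (Suc k))" and uS: "u \<notin> S (Suc k)" and uV: "u \<in> V"
          using u unfolding W_def by auto
        have noadj: "\<And>v. v \<in> S (Suc k) \<Longrightarrow> \<not> E v u"
        proof
          fix v assume "v \<in> S (Suc k)" "E v u"
          then have "u \<in> nbhd E (S (Suc k))" unfolding nbhd_def by auto
          then show False using uN by simp
        qed
        have yS: "y \<notin> S (Suc k)" using noadj sym[OF uy] by auto
        have ynk: "y \<notin> nbhd E (S k)"
        proof
          assume yk: "y \<in> nbhd E (S k)"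
          have "u \<in> W k" using uN uS uV nsub sub unfolding W_def by auto
          then have "u \<in> V - (nbhd E (S k) \<union> S k)" unfolding W_def by simp
          from cs_dom[OF cs this yk uy sym] obtain x where "x \<in> S (Suc k)" "E u x" by auto
          then show False using noadj sym by auto
        qed
        have yV: "y \<in> V" using inV[OF uy] by simp
        have yW: "y \<in> W k" using yV ynk yS sub unfolding W_def by auto
        obtain z where z: "z \<in> S (Suc k)" "E z y" using y unfolding nbhd_def by auto
        have zk: "z \<notin> S k"
        proof
          assume "z \<in> S k"
          then have "y \<in> nbhd E (S k)" using z(2) unfolding nbhd_def by auto
          then show False using ynk by simp
        qed
        have zN: "z \<in> nbhd E (S k)" using cs_new[OF cs] z(1) zk by auto
        obtain qs where qs: "ipath E (qs @ [z, y])" "length qs = k" "set qs \<subseteq> S k"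
          using IH yW zN sym[OF z(2)] by blast
        have uy': "u \<noteq> y" using uy irr by auto
        have notin: "u \<notin> set (qs @ [z, y])" using qs(3) sub uS z(1) uy' by auto
        have bl: "butlast (qs @ [z, y]) = qs @ [z]" by (simp add: butlast_append)
        have np: "ipath E ((qs @ [z, y]) @ [u])"
        proof (rule ipath_snoc[OF sym qs(1)])
          show "qs @ [z, y] \<noteq> []" by simp
          show "u \<notin> set (qs @ [z, y])" by (rule notin)
          show "E (last (qs @ [z, y])) u" using sym[OF uy] by simp
          show "\<forall>v\<in>set (butlast (qs @ [z, y])). \<not> E v u"
            unfolding bl using qs(3) sub z(1) noadj by auto
        qed
        show "\<exists>qs. ipath E (qs @ [y, u]) \<and> length qs = Suc k \<and> set qs \<subseteq> S (Suc k)"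
          by (rule exI[of _ "qs @ [z]"]) (use np qs(2,3) sub z(1) in auto)
      qed
    qed
  qed
  have part2: "V - (S (t - 1) \<union> nbhd E (S (t - 1))) = {}"
  proof (rule ccontr)
    define T where "T = S (t - 1) \<union> nbhd E (S (t - 1))"
    assume "V - (S (t - 1) \<union> nbhd E (S (t - 1))) \<noteq> {}"
    then obtain u0 where u0: "u0 \<in> V" "u0 \<notin> T" unfolding T_def by auto
    have B: "S (t - 1) \<subseteq> V" "a \<in> S (t - 1)" using basic[OF t1 order_refl] by auto
    have aT: "a \<in> T" using B(2) unfolding T_def by simp
    have "(\<lambda>u v. E u v \<and> u \<in> V \<and> v \<in> V)\<^sup>*\<^sup>* a u0"
      using assms(4) assms(6) u0(1) unfolding connected_graph_def by auto
    from rtranclp_cross[OF this aT u0(2)]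
    obtain x v where xv: "E x v" "x \<in> T" "v \<notin> T" "v \<in> V" by auto
    have xS: "x \<notin> S (t - 1)"
    proof
      assume "x \<in> S (t - 1)"
      then have "v \<in> nbhd E (S (t - 1))" using xv(1) unfolding nbhd_def by auto
      then show False using xv(3) unfolding T_def by simp
    qed
    have xN: "x \<in> nbhd E (S (t - 1))" using xv(2) xS unfolding T_def by simp
    have vW: "v \<in> W (t - 1)" using xv(3,4) unfolding T_def W_def by auto
    obtain qs where qs: "ipath E (qs @ [x, v])" "length qs = t - 1" "set qs \<subseteq> S (t - 1)"
      using PL[OF t1 order_refl] vW xN sym[OF xv(1)] by blast
    have "set (qs @ [x, v]) \<subseteq> V" using qs(3) B(1) inV[OF xv(1)] by auto
    moreover have "t \<le> length (qs @ [x, v])" using qs(2) by simp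
    ultimately have "has_induced V E t path_graph" using ipath_induced[OF qs(1)] by blast
    then show False using noP by simp
  qed
  show ?thesis using part1 part2 unfolding R_def by simp
qed

end
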